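(* Let $G$ be a connected graph and let $S \subseteq V(G)$ with $|S| = k \ge 1$. Then there exists a connected induced subgraph $H$ of $G$ with $S \subseteq V(H)$ and a partition $V(H) = A \cup B$ into two disjoint sets such that: (1) every connected component of $G[A]$ and every connected component of $G[B]$ has at most $\lceil k/2 \rceil$ vertices; (2) the spanning subgraph of $H$ with vertex set $V(H)$ whose edges are exactly the edges of $H$ with one endpoint in $A$ and the other in $B$ is connected; (3) every vertex $v \in V(G)\setminus V(H)$ that is adjacent in $G$ to at least one vertex of $V(H)$ has a neighbor $a\in A$ and a neighbor $b \in B$.
   Context: All graphs are finite and simple. $G[X]$ denotes the subgraph of $G$ induced by the vertex set $X$. *)

theory Defs
  imports Complex_Main
begin

definition simple_graph :: "'a set \<Rightarrow> ('a \<Rightarrow> 'a \<Rightarrow> bool) \<Rightarrow> bool" where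
  "simple_graph V E \<longleftrightarrow> finite V \<and> (\<forall>x y. E x y \<longrightarrow> x \<in> V \<and> y \<in> V)
     \<and> (\<forall>x y. E x y \<longrightarrow> E y x) \<and> (\<forall>x. \<not> E x x)"

definition connected_on :: "'a set \<Rightarrow> ('a \<Rightarrow> 'a \<Rightarrow> bool) \<Rightarrow> bool" where
  "connected_on X E \<longleftrightarrow> X \<noteq> {} \<and>
     (\<forall>x\<in>X. \<forall>y\<in>X. (\<lambda>a b. a \<in> X \<and> b \<in> X \<and> E a b)\<^sup>*\<^sup>* x y)"

definition component_of :: "'a set \<Rightarrow> ('a \<Rightarrow> 'a \<Rightarrow> bool) \<Rightarrow> 'a set \<Rightarrow> bool" where
  "component_of A E C \<longleftrightarrow> C \<subseteq> A \<and> connected_on C E \<and>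
     (\<forall>D. C \<subseteq> D \<and> D \<subseteq> A \<and> connected_on D E \<longrightarrow> D = C)"

end

theory Submission
  imports Defs
begin


abbreviation rch :: "'a set \<Rightarrow> ('a \<Rightarrow> 'a \<Rightarrow> bool) \<Rightarrow> 'a \<Rightarrow> 'a \<Rightarrow> bool" where
  "rch X R \<equiv> (\<lambda>a b. a \<in> X \<and> b \<in> X \<and> R a b)\<^sup>*\<^sup>*"

lemma rch_sep:
  assumes "rch X R x y" "x \<in> P" "\<And>a b. a \<in> P \<Longrightarrow> b \<in> X \<Longrightarrow> R a b \<Longrightarrow> b \<in> P"
  shows "y \<in> P"
  using assms by (induction rule: rtranclp_induct) auto

lemma rch_sep2:
  assumes "rch X R x y" "x \<in> P" "\<And>a b. a \<in> P \<Longrightarrow> b \<in> X \<Longrightarrow> R a b \<Longrightarrow> b \<in> P"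
  shows "y \<in> P \<and> rch P R x y"
  using assms
proof (induction rule: rtranclp_induct)
  case base then show ?case by auto
next
  case (step y z)
  then have "y \<in> P" "rch P R x y" by auto
  moreover have "z \<in> P" using step \<open>y \<in> P\<close> by auto
  ultimately show ?case using step by (auto intro: rtranclp.rtrancl_into_rtrancl)
qed

lemma rch_gate:
  assumes "rch X R x y" "x \<in> P" "\<And>a b. a \<in> P \<Longrightarrow> b \<in> X \<Longrightarrow> R a b \<Longrightarrow> b \<in> P \<or> b = g"
  shows "(y \<in> P \<and> rch (insert g P) R x y) \<or> rch (insert g P) R x g"
  using assms
proof (induction rule: rtranclp_induct)
  case base then show ?case by auto
next
  case (step y z)
  then consider "y \<in> P" "rch (insert g P) R x y" | "rch (insert g P) R x g" by auto
  then show ?case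
  proof cases
    case 1
    with step have "z \<in> P \<or> z = g" by auto
    then show ?thesis using 1 step by (auto intro: rtranclp.rtrancl_into_rtrancl)
  qed auto
qed

lemma rch_mono:
  assumes "rch X R x y" "X \<subseteq> Y" shows "rch Y R x y"
  using assms by (induction rule: rtranclp_induct) (auto intro: rtranclp.rtrancl_into_rtrancl)

lemma rch_sym:
  assumes "rch X R x y" "\<And>a b. R a b \<Longrightarrow> R b a" shows "rch X R y x"
  using assms
proof (induction rule: rtranclp_induct)
  case base then show ?case by auto
next
  case (step y z)
  then show ?case by (auto intro: converse_rtranclp_into_rtranclp)
qed

lemma conn_hub:
  assumes "h \<in> X" "\<And>x. x \<in> X \<Longrightarrow> rch X R h x" "\<And>a b. R a b \<Longrightarrow> R b a"
  shows "connected_on X R"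
  unfolding connected_on_def
proof (intro conjI ballI)
  show "X \<noteq> {}" using assms by auto
  fix x y assume "x \<in> X" "y \<in> X"
  have "rch X R x h" using rch_sym[OF assms(2)[OF \<open>x\<in>X\<close>]] assms(3) by blast
  then show "rch X R x y" using assms(2)[OF \<open>y\<in>X\<close>] by (rule rtranclp_trans)
qed

lemma conn_rch: "connected_on X R \<Longrightarrow> x \<in> X \<Longrightarrow> y \<in> X \<Longrightarrow> rch X R x y"
  unfolding connected_on_def by blast

lemma conn_Un:
  assumes "connected_on X R" "connected_on Y R" "h \<in> X" "h \<in> Y" "\<And>a b. R a b \<Longrightarrow> R b a"
  shows "connected_on (X \<union> Y) R"
proof (rule conn_hub[of h])
  fix x assume "x \<in> X \<union> Y"
  then show "rch (X \<union> Y) R h x"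
  proof
    assume "x \<in> X" then show ?thesis using rch_mono[OF conn_rch[OF assms(1) assms(3)]] by blast
  next
    assume "x \<in> Y" then show ?thesis using rch_mono[OF conn_rch[OF assms(2) assms(4)]] by blast
  qed
qed (use assms in auto)

lemma conn_insert:
  assumes "connected_on X R" "u \<in> X" "R u v" "\<And>a b. R a b \<Longrightarrow> R b a"
  shows "connected_on (insert v X) R"
proof (rule conn_hub[of u])
  fix x assume "x \<in> insert v X"
  then show "rch (insert v X) R u x"
  proof
    assume "x = v" then show ?thesis using assms by auto
  next
    assume "x \<in> X" then show ?thesis using rch_mono[OF conn_rch[OF assms(1) assms(2)]] by blast
  qed
qed (use assms in auto)

lemma conn_rel_mono:
  assumes "connected_on X R" "\<And>a b. R a b \<Longrightarrow> R' a b" shows "connected_on X R'"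
proof -
  have "rch X R x y \<Longrightarrow> rch X R' x y" for x y
    by (induction rule: rtranclp_induct) (auto intro: rtranclp.rtrancl_into_rtrancl assms(2))
  then show ?thesis using assms(1) unfolding connected_on_def by blast
qed



definition cr :: "('a \<Rightarrow> 'a \<Rightarrow> bool) \<Rightarrow> 'a set \<Rightarrow> 'a set \<Rightarrow> 'a \<Rightarrow> 'a \<Rightarrow> bool" where
  "cr E A B = (\<lambda>a b. E a b \<and> ((a \<in> A \<and> b \<in> B) \<or> (a \<in> B \<and> b \<in> A)))"

lemma cr_sym: "(\<And>a b. E a b \<Longrightarrow> E b a) \<Longrightarrow> cr E A B a b \<Longrightarrow> cr E A B b a"
  unfolding cr_def by auto

lemma flip:
  assumes fin: "finite X" and sym: "\<And>a b. E a b \<Longrightarrow> E b a" and conn: "connected_on X E"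
    and part: "A \<union> B = X" "A \<inter> B = {}"
  shows "\<exists>A' B'. A' \<union> B' = X \<and> A' \<inter> B' = {} \<and> connected_on X (cr E A' B') \<and>
     (\<forall>C. connected_on C E \<and> (C \<subseteq> A' \<or> C \<subseteq> B') \<longrightarrow> C \<subseteq> A \<or> C \<subseteq> B)"
proof -
  define Q where "Q = (\<lambda>(A'::'a set, B'::'a set). A' \<union> B' = X \<and> A' \<inter> B' = {} \<and> (\<forall>a b. cr E A B a b \<longrightarrow> cr E A' B' a b))"
  define f where "f = (\<lambda>(A'::'a set, B'::'a set). card {p \<in> X \<times> X. cr E A' B' (fst p) (snd p)})"
  have "Q (A, B)" unfolding Q_def using part by auto
  moreover have "\<forall>y. Q y \<longrightarrow> f y < card (X \<times> X) + 1"
  proof (intro allI impI)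
    fix y :: "'a set \<times> 'a set"
    obtain A' B' where y: "y = (A', B')" by (cases y)
    have "f y \<le> card (X \<times> X)" unfolding y f_def using fin by (simp only: case_prod_conv) (rule card_mono, auto)
    then show "f y < card (X \<times> X) + 1" by simp
  qed
  ultimately obtain M where QM: "Q M" and maxM: "\<forall>y. Q y \<longrightarrow> f y \<le> f M"
    using Lattices_Big.ex_has_greatest_nat[of Q "(A,B)" f] by blast
  obtain A' B' where M: "M = (A', B')" by (cases M)
  have p1: "A' \<union> B' = X" and p2: "A' \<inter> B' = {}" and pres: "\<And>a b. cr E A B a b \<Longrightarrow> cr E A' B' a b"
    using QM unfolding M Q_def by auto
  have symc: "\<And>a b. cr E A' B' a b \<Longrightarrow> cr E A' B' b a" by (rule cr_sym[OF sym])
  have "connected_on X (cr E A' B')"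
  proof (rule ccontr)
    assume nc: "\<not> connected_on X (cr E A' B')"
    have "X \<noteq> {}" using conn unfolding connected_on_def by auto
    then obtain x0 where x0: "x0 \<in> X" by auto
    define D where "D = {y \<in> X. rch X (cr E A' B') x0 y}"
    have x0D: "x0 \<in> D" unfolding D_def using x0 by auto
    have "D \<noteq> X"
    proof
      assume "D = X"
      have "connected_on X (cr E A' B')"
      proof (rule conn_hub[OF x0])
        fix x assume "x \<in> X" then show "rch X (cr E A' B') x0 x" using \<open>D = X\<close> unfolding D_def by auto
      qed (rule symc)
      with nc show False by simp
    qed
    then obtain y where y: "y \<in> X" "y \<notin> D" unfolding D_def by auto
    have "\<exists>a b. a \<in> D \<and> b \<in> X \<and> E a b \<and> b \<notin> D"
    proof (rule ccontr)
      assume "\<not> ?thesis"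
      then have "y \<in> D" using rch_sep[OF conn_rch[OF conn x0 y(1)] x0D] by blast
      with y show False by simp
    qed
    then obtain a b where ab: "a \<in> D" "b \<in> X" "E a b" "b \<notin> D" by blast
    have Dclos: "\<And>a b. a \<in> D \<Longrightarrow> b \<in> X \<Longrightarrow> cr E A' B' a b \<Longrightarrow> b \<in> D"
      unfolding D_def by (auto intro: rtranclp.rtrancl_into_rtrancl)
    have Dclos2: "a \<in> D" if "a \<in> X" "b \<in> D" "cr E A' B' a b" for a b
      using Dclos[OF that(2) that(1) symc[OF that(3)]] .
    have DX: "D \<subseteq> X" unfolding D_def by auto
    define A'' where "A'' = (A' - D) \<union> (B' \<inter> D)"
    define B'' where "B'' = (B' - D) \<union> (A' \<inter> D)"
    have keep: "cr E A'' B'' a b" if "a \<in> X" "b \<in> X" "cr E A' B' a b" for a b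
    proof -
      have "a \<in> D \<longleftrightarrow> b \<in> D" using Dclos Dclos2 that by blast
      then show ?thesis using that p2 unfolding cr_def A''_def B''_def by auto
    qed
    have "Q (A'', B'')"
      unfolding Q_def
    proof (simp, intro conjI allI impI)
      show "A'' \<union> B'' = X" using p1 DX unfolding A''_def B''_def by auto
      show "A'' \<inter> B'' = {}" using p2 unfolding A''_def B''_def by auto
      fix a b assume "cr E A B a b"
      moreover then have "a \<in> X" "b \<in> X" using part unfolding cr_def by auto
      ultimately show "cr E A'' B'' a b" using keep pres by blast
    qed
    then have le: "f (A'', B'') \<le> f (A', B')" using maxM M by auto
    have sub: "{p \<in> X \<times> X. cr E A' B' (fst p) (snd p)} \<subset> {p \<in> X \<times> X. cr E A'' B'' (fst p) (snd p)}"
    proof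
      show "{p \<in> X \<times> X. cr E A' B' (fst p) (snd p)} \<subseteq> {p \<in> X \<times> X. cr E A'' B'' (fst p) (snd p)}"
        using keep by auto
      have "\<not> cr E A' B' a b" using Dclos ab by blast
      then have "cr E A'' B'' a b" using ab p1 p2 DX unfolding cr_def A''_def B''_def by auto
      moreover have "a \<in> X" using ab DX by auto
      ultimately have in2: "(a, b) \<in> {p \<in> X \<times> X. cr E A'' B'' (fst p) (snd p)}" using ab by auto
      have "(a, b) \<notin> {p \<in> X \<times> X. cr E A' B' (fst p) (snd p)}" using \<open>\<not> cr E A' B' a b\<close> by auto
      with in2 show "{p \<in> X \<times> X. cr E A' B' (fst p) (snd p)} \<noteq> {p \<in> X \<times> X. cr E A'' B'' (fst p) (snd p)}"
        by blast
    qed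
    have "f (A', B') < f (A'', B'')" unfolding f_def using psubset_card_mono[OF _ sub] fin by auto
    with le show False by simp
  qed
  moreover have "C \<subseteq> A \<or> C \<subseteq> B" if C: "connected_on C E" "C \<subseteq> A' \<or> C \<subseteq> B'" for C
  proof -
    obtain c where c: "c \<in> C" using C unfolding connected_on_def by auto
    have CX: "C \<subseteq> X" using C p1 by auto
    have same: "b \<in> A \<longleftrightarrow> a \<in> A" if "a \<in> C" "b \<in> C" "E a b" for a b
    proof -
      have "\<not> cr E A' B' a b" using C that p2 unfolding cr_def by auto
      then have "\<not> cr E A B a b" using pres by blast
      then show ?thesis using that CX part unfolding cr_def by auto
    qed
    show ?thesis
    proof (cases "c \<in> A")
      case True
      have "y \<in> A" if "y \<in> C" for y
        using rch_sep[OF conn_rch[OF C(1) c that], of "C \<inter> A"] True same c by blast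
      then show ?thesis by auto
    next
      case False
      then have cB: "c \<in> B" using c CX part by auto
      have "y \<in> B" if "y \<in> C" for y
      proof -
        have "y \<in> C - A" using rch_sep[OF conn_rch[OF C(1) c that], of "C - A"] False same c by blast
        then have "y \<notin> A" by auto
        then show ?thesis using that CX part by auto
      qed
      then show ?thesis by auto
    qed
  qed
  ultimately show ?thesis using p1 p2 by blast
qed



definition good where
  "good V E S h X A B \<longleftrightarrow> X \<subseteq> V \<and> connected_on X E \<and> S \<subseteq> X \<and> A \<union> B = X \<and> A \<inter> B = {} \<and>
     (\<forall>C. connected_on C E \<and> (C \<subseteq> A \<or> C \<subseteq> B) \<longrightarrow> card C \<le> h) \<and> connected_on X (cr E A B)"

lemma cr_swap: "cr E B A = cr E A B" unfolding cr_def by (intro ext) auto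

lemma good_swap:
  assumes "good V E S h X A B" shows "good V E S h X B A"
proof -
  have e: "cr E B A = cr E A B" by (rule cr_swap)
  show ?thesis using assms unfolding good_def e by blast
qed

lemma good_step:
  assumes sym: "\<And>a b. E a b \<Longrightarrow> E b a" and h: "1 \<le> h"
    and g: "good V E S h X A B" and v: "v \<in> V" "v \<notin> X" and u: "u \<in> X" "E v u"
    and nb: "\<not> (\<exists>b\<in>B. E v b)"
  shows "good V E S h (insert v X) A (insert v B)"
proof -
  from g have X: "X \<subseteq> V" "connected_on X E" "S \<subseteq> X" "A \<union> B = X" "A \<inter> B = {}"
    "\<And>C. connected_on C E \<Longrightarrow> C \<subseteq> A \<or> C \<subseteq> B \<Longrightarrow> card C \<le> h" "connected_on X (cr E A B)"
    unfolding good_def by auto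
  have uA: "u \<in> A" using u nb X(4) by auto
  have vA: "v \<notin> A" using v X(4) by auto
  have c1: "connected_on (insert v X) E" using conn_insert[OF X(2) u(1) sym[OF u(2)] sym] .
  have c2: "connected_on X (cr E A (insert v B))"
    by (rule conn_rel_mono[OF X(7)]) (auto simp: cr_def)
  have c3: "connected_on (insert v X) (cr E A (insert v B))"
    by (rule conn_insert[OF c2 u(1)]) (use uA sym u(2) in \<open>auto simp: cr_def\<close>)
  have bnd: "card C \<le> h" if C: "connected_on C E" "C \<subseteq> A \<or> C \<subseteq> insert v B" for C
  proof (cases "v \<in> C")
    case False
    then have "C \<subseteq> A \<or> C \<subseteq> B" using C by auto
    then show ?thesis using X(6) C by blast
  next
    case True
    then have CB: "C \<subseteq> insert v B" using C vA by auto
    have "y \<in> {v}" if "y \<in> C" for y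
      by (rule rch_sep[OF conn_rch[OF C(1) True that]]) (use CB nb in auto)
    then have "C \<subseteq> {v}" by auto
    then have "card C \<le> 1" using card_mono[of "{v}" C] by simp
    then show ?thesis using h by simp
  qed
  show ?thesis unfolding good_def
    using X v c1 c3 bnd vA by auto
qed

lemma extend:
  assumes fin: "finite V" and sym: "\<And>a b. E a b \<Longrightarrow> E b a" and h: "1 \<le> h"
  shows "good V E S h X A B \<Longrightarrow> \<exists>X A B. good V E S h X A B \<and>
      (\<forall>v \<in> V - X. (\<exists>u \<in> X. E v u) \<longrightarrow> (\<exists>a \<in> A. E v a) \<and> (\<exists>b \<in> B. E v b))"
proof (induction "card (V - X)" arbitrary: X A B rule: less_induct)
  case less
  show ?case
  proof (cases "\<forall>v \<in> V - X. (\<exists>u \<in> X. E v u) \<longrightarrow> (\<exists>a \<in> A. E v a) \<and> (\<exists>b \<in> B. E v b)")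
    case True then show ?thesis using less.prems by blast
  next
    case False
    then obtain v u where v: "v \<in> V" "v \<notin> X" and u: "u \<in> X" "E v u"
      and nab: "\<not> (\<exists>a \<in> A. E v a) \<or> \<not> (\<exists>b \<in> B. E v b)" by blast
    have XV: "X \<subseteq> V" using less.prems unfolding good_def by auto
    have lt: "card (V - insert v X) < card (V - X)"
      using v fin by (metis Diff_insert Diff_iff card_Diff1_less finite_Diff)
    from nab show ?thesis
    proof
      assume nb: "\<not> (\<exists>b \<in> B. E v b)"
      have "good V E S h (insert v X) A (insert v B)" by (rule good_step[OF sym h less.prems v u nb])
      then show ?thesis using less.hyps[OF lt] by blast
    next
      assume na: "\<not> (\<exists>a \<in> A. E v a)"
      have "good V E S h (insert v X) B (insert v A)" by (rule good_step[OF sym h good_swap[OF less.prems] v u na])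
      then show ?thesis using less.hyps[OF lt] by blast
    qed
  qed
qed



definition minl where "minl E X S \<longleftrightarrow> (\<forall>Y. Y \<subseteq> X \<longrightarrow> S \<subseteq> Y \<longrightarrow> connected_on Y E \<longrightarrow> Y = X)"

definition col where
  "col E X k r A B \<longleftrightarrow> A \<union> B = X \<and> A \<inter> B = {} \<and>
     (\<forall>C. connected_on C E \<and> (C \<subseteq> A \<or> C \<subseteq> B) \<longrightarrow> card C \<le> (k + 1) div 2) \<and>
     (\<forall>C. connected_on C E \<and> (C \<subseteq> A \<or> C \<subseteq> B) \<and> r \<in> C \<longrightarrow> card C \<le> k div 2)"

lemma col_swap: "col E X k r A B \<Longrightarrow> col E X k r B A" unfolding col_def by blast

lemma col_v: "col E X k r A B \<Longrightarrow> v \<in> X \<Longrightarrow> \<exists>A B. col E X k r A B \<and> v \<in> A"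
proof (cases "v \<in> A")
  case False
  assume c: "col E X k r A B" "v \<in> X"
  then have "v \<in> B" using False unfolding col_def by auto
  then show ?thesis using col_swap[OF c(1)] by blast
qed blast

lemma base_col:
  assumes fin: "finite S" and r: "r \<in> S" and k: "2 \<le> card S"
  shows "\<exists>A B. col E S (card S) r A B"
proof -
  have "card S div 2 - 1 \<le> card (S - {r})" using r fin k by simp
  then obtain A0 where A0: "A0 \<subseteq> S - {r}" "card A0 = card S div 2 - 1" "finite A0"
    by (rule obtain_subset_with_card_n)
  define A where "A = insert r A0"
  have rA0: "r \<notin> A0" using A0 by auto
  have "1 \<le> card S div 2" using k by simp
  then have cA: "card A = card S div 2" unfolding A_def using A0 rA0 by simp
  have AS: "A \<subseteq> S" using A0 r unfolding A_def by auto
  have cB: "card (S - A) = (card S + 1) div 2" using card_Diff_subset[OF finite_subset[OF AS fin] AS] cA by simp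
  have "col E S (card S) r A (S - A)"
    unfolding col_def
  proof (intro conjI allI impI)
    show "A \<union> (S - A) = S" using AS by auto
    show "A \<inter> (S - A) = {}" by auto
    fix C assume C: "connected_on C E \<and> (C \<subseteq> A \<or> C \<subseteq> S - A)"
    then have "C \<subseteq> A \<or> C \<subseteq> S - A" by blast
    then show "card C \<le> (card S + 1) div 2"
    proof
      assume "C \<subseteq> A"
      then have "card C \<le> card A" using card_mono[OF finite_subset[OF AS fin]] by blast
      then show ?thesis using cA by simp
    next
      assume "C \<subseteq> S - A"
      then have "card C \<le> card (S - A)" using card_mono[of "S - A"] fin by blast
      then show ?thesis using cB by simp
    qed
  next
    fix C assume C: "connected_on C E \<and> (C \<subseteq> A \<or> C \<subseteq> S - A) \<and> r \<in> C"
    then have "C \<subseteq> A" unfolding A_def by auto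
    then have "card C \<le> card A" using card_mono[OF finite_subset[OF AS fin]] by blast
    then show "card C \<le> card S div 2" using cA by simp
  qed
  then show ?thesis by blast
qed



lemma rec_col:
  assumes sym: "\<And>a b. E a b \<Longrightarrow> E b a"
  shows "finite X \<Longrightarrow> connected_on X E \<Longrightarrow> S \<subseteq> X \<Longrightarrow> minl E X S \<Longrightarrow> r \<in> S \<Longrightarrow> 2 \<le> card S
    \<Longrightarrow> \<exists>A B. col E X (card S) r A B"
proof (induction "card X" arbitrary: X S r rule: less_induct)
  case less
  note fin = less.prems(1) and conn = less.prems(2) and SX = less.prems(3) and mn = less.prems(4)
    and r = less.prems(5) and k2 = less.prems(6)
  have finS: "finite S" using fin SX finite_subset by blast
  show ?case
  proof (cases "X \<subseteq> S")
    case True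
    then have "X = S" using SX by auto
    then show ?thesis using base_col[OF finS r k2] by simp
  next
    case False
    then obtain v where v: "v \<in> X" "v \<notin> S" by auto
    define R0 where "R0 = {y \<in> X - {v}. rch (X - {v}) E r y}"
    define K where "K = X - {v} - R0"
    define X1 where "X1 = insert v K"
    define X2 where "X2 = insert v R0"
    have rv: "r \<noteq> v" "r \<in> X" using v r SX by auto
    have rR0: "r \<in> R0" unfolding R0_def using rv by auto
    have R0X: "R0 \<subseteq> X - {v}" unfolding R0_def by auto
    have KX: "K \<subseteq> X - {v}" unfolding K_def by auto
    have noedge: "\<not> E a b" if "a \<in> R0" "b \<in> K" for a b
    proof
      assume "E a b"
      then have "rch (X - {v}) E r b" using that R0X KX unfolding R0_def
        by (auto intro: rtranclp.rtrancl_into_rtrancl)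
      then have "b \<in> R0" using that KX unfolding R0_def by auto
      then show False using that unfolding K_def by auto
    qed
    have noedge2: "\<not> E a b" if "a \<in> K" "b \<in> R0" for a b
      using noedge[OF that(2) that(1)] sym[of a b] by blast
    have X2conn: "connected_on X2 E"
    proof (rule conn_hub[of r])
      show "r \<in> X2" unfolding X2_def using rR0 by auto
      fix x assume "x \<in> X2"
      then consider "x = v" | "x \<in> R0" unfolding X2_def by auto
      then show "rch X2 E r x"
      proof cases
        case 1
        have "(v \<in> R0 \<and> rch (insert v R0) E r v) \<or> rch (insert v R0) E r v"
        proof (rule rch_gate[OF conn_rch[OF conn rv(2) v(1)] rR0])
          fix a b assume "a \<in> R0" "b \<in> X" "E a b"
          then show "b \<in> R0 \<or> b = v" unfolding R0_def by (auto intro: rtranclp.rtrancl_into_rtrancl)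
        qed
        then show ?thesis using 1 unfolding X2_def by auto
      next
        case 2
        have "rch (X - {v}) E r x" using 2 unfolding R0_def by auto
        then have "x \<in> R0 \<and> rch R0 E r x"
          by (rule rch_sep2[OF _ rR0]) (auto simp: R0_def intro: rtranclp.rtrancl_into_rtrancl)
        then show ?thesis using rch_mono[of R0 E r x X2] unfolding X2_def by blast
      qed
    qed (rule sym)
    have X1conn: "connected_on X1 E"
    proof (rule conn_hub[of v])
      show "v \<in> X1" unfolding X1_def by auto
      fix x assume "x \<in> X1"
      then consider "x = v" | "x \<in> K" unfolding X1_def by auto
      then show "rch X1 E v x"
      proof cases
        case 2
        have "(v \<in> K \<and> rch (insert v K) E x v) \<or> rch (insert v K) E x v"
        proof (rule rch_gate[OF conn_rch[OF conn _ v(1)] 2])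
          show "x \<in> X" using 2 KX by auto
          fix a b assume "a \<in> K" "b \<in> X" "E a b"
          then show "b \<in> K \<or> b = v" using noedge2 unfolding K_def by auto
        qed
        then have "rch X1 E x v" unfolding X1_def by auto
        then show ?thesis by (rule rch_sym[OF _ sym])
      qed auto
    qed (rule sym)
    have Kne: "K \<noteq> {}"
    proof
      assume "K = {}"
      then have eq: "X - {v} = R0" using R0X unfolding K_def by auto
      have "connected_on (X - {v}) E"
      proof (rule conn_hub[of r])
        show "r \<in> X - {v}" using rv by auto
        fix x assume "x \<in> X - {v}"
        then have "x \<in> R0" using eq by simp
        then show "rch (X - {v}) E r x" unfolding R0_def by auto
      qed (rule sym)
      then have "X - {v} = X" using mn SX v unfolding minl_def by blast
      then show False using v by auto
    qed
    have X12: "X1 \<union> X2 = X" "X1 \<inter> X2 = {v}" "X1 \<subseteq> X" "X2 \<subseteq> X"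
      using R0X KX v unfolding X1_def X2_def K_def by auto
    have KS: "K \<inter> S \<noteq> {}"
    proof
      assume "K \<inter> S = {}"
      then have "S \<subseteq> X2" using SX unfolding X2_def K_def by auto
      then have "X2 = X" using mn X12 X2conn unfolding minl_def by blast
      then show False using Kne KX unfolding X2_def K_def by auto
    qed
    define S1 where "S1 = insert v (S \<inter> K)"
    define S2 where "S2 = insert v (S - K)"
    have cS: "card (S \<inter> K) + card (S - K) = card S"
    proof -
      have "(S \<inter> K) \<union> (S - K) = S" "(S \<inter> K) \<inter> (S - K) = {}" by auto
      then show ?thesis using card_Un_disjoint[of "S \<inter> K" "S - K"] finS by simp
    qed
    have cS1: "card S1 = card (S \<inter> K) + 1" unfolding S1_def using finS v by auto
    have cS2: "card S2 = card (S - K) + 1" unfolding S2_def using finS v by auto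
    have "0 < card (S \<inter> K)" using KS finS by (auto simp: card_gt_0_iff)
    then have k1: "2 \<le> card S1" using cS1 by simp
    have "r \<in> S - K" using r rR0 unfolding K_def by auto
    then have "0 < card (S - K)" using finS by (auto simp: card_gt_0_iff)
    then have k2': "2 \<le> card S2" using cS2 by simp
    have ksum: "card S1 + card S2 = card S + 2" using cS cS1 cS2 by simp
    have min1: "minl E X1 S1" unfolding minl_def
    proof (intro allI impI)
      fix Y assume Y: "Y \<subseteq> X1" "S1 \<subseteq> Y" "connected_on Y E"
      have "v \<in> Y" using Y unfolding S1_def by auto
      then have "connected_on (Y \<union> X2) E" using conn_Un[OF Y(3) X2conn _ _ sym, of v] unfolding X2_def by auto
      moreover have "S \<subseteq> Y \<union> X2" using Y SX unfolding S1_def X2_def K_def by auto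
      moreover have "Y \<union> X2 \<subseteq> X" using Y X12 by auto
      ultimately have "Y \<union> X2 = X" using mn unfolding minl_def by blast
      then show "Y = X1" using Y X12 \<open>v \<in> Y\<close> unfolding X1_def X2_def K_def by auto
    qed
    have min2: "minl E X2 S2" unfolding minl_def
    proof (intro allI impI)
      fix Y assume Y: "Y \<subseteq> X2" "S2 \<subseteq> Y" "connected_on Y E"
      have "v \<in> Y" using Y unfolding S2_def by auto
      then have "connected_on (Y \<union> X1) E" using conn_Un[OF Y(3) X1conn _ _ sym, of v] unfolding X1_def by auto
      moreover have "S \<subseteq> Y \<union> X1" using Y SX unfolding S2_def X1_def by auto
      moreover have "Y \<union> X1 \<subseteq> X" using Y X12 by auto
      ultimately have "Y \<union> X1 = X" using mn unfolding minl_def by blast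
      then show "Y = X2" using Y X12 \<open>v \<in> Y\<close> unfolding X1_def X2_def K_def by auto
    qed
    have lt1: "card X1 < card X"
      using psubset_card_mono[OF fin, of X1] X12 rv rR0 unfolding X1_def K_def by auto
    have lt2: "card X2 < card X"
    proof -
      have "X2 \<subset> X" using X12 Kne KX unfolding X2_def K_def by auto
      then show ?thesis using psubset_card_mono[OF fin] by blast
    qed
    have "\<exists>A B. col E X1 (card S1) v A B"
    proof (rule less.hyps[OF lt1 _ X1conn _ min1 _ k1])
      show "finite X1" using fin X12(3) by (rule finite_subset[rotated])
      show "S1 \<subseteq> X1" unfolding S1_def X1_def by auto
      show "v \<in> S1" unfolding S1_def by auto
    qed
    then obtain A1 B1 where c1: "col E X1 (card S1) v A1 B1" "v \<in> A1"
      using col_v[of E X1 _ v _ _ v] unfolding X1_def by blast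
    have "\<exists>A B. col E X2 (card S2) r A B"
    proof (rule less.hyps[OF lt2 _ X2conn _ min2 _ k2'])
      show "finite X2" using fin X12(4) by (rule finite_subset[rotated])
      show "S2 \<subseteq> X2" using SX unfolding S2_def X2_def K_def by auto
      show "r \<in> S2" using \<open>r \<in> S - K\<close> unfolding S2_def by auto
    qed
    then obtain A2 B2 where c2: "col E X2 (card S2) r A2 B2" "v \<in> A2"
      using col_v[of E X2 _ r _ _ v] unfolding X2_def by blast

    define k where "k = card S"
    define k1 where "k1 = card S1"
    define k2 where "k2 = card S2"
    have p1: "A1 \<union> B1 = X1" "A1 \<inter> B1 = {}"
      and b1: "\<And>C. connected_on C E \<Longrightarrow> C \<subseteq> A1 \<or> C \<subseteq> B1 \<Longrightarrow> card C \<le> (k1 + 1) div 2"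
      and r1: "\<And>C. connected_on C E \<Longrightarrow> C \<subseteq> A1 \<or> C \<subseteq> B1 \<Longrightarrow> v \<in> C \<Longrightarrow> card C \<le> k1 div 2"
      using c1(1) unfolding col_def k1_def by auto
    have p2: "A2 \<union> B2 = X2" "A2 \<inter> B2 = {}"
      and b2: "\<And>C. connected_on C E \<Longrightarrow> C \<subseteq> A2 \<or> C \<subseteq> B2 \<Longrightarrow> card C \<le> (k2 + 1) div 2"
      and r2: "\<And>C. connected_on C E \<Longrightarrow> C \<subseteq> A2 \<or> C \<subseteq> B2 \<Longrightarrow> r \<in> C \<Longrightarrow> card C \<le> k2 div 2"
      using c2(1) unfolding col_def k2_def by auto
    have kk: "k1 + k2 = k + 2" "2 \<le> k1" "2 \<le> k2" using ksum k1 k2' unfolding k_def k1_def k2_def by auto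
    define A where "A = A1 \<union> A2"
    define B where "B = B1 \<union> B2"
    have AX1: "A \<inter> X1 \<subseteq> A1" using X12 p1 p2 c1 unfolding A_def by auto
    have BX1: "B \<inter> X1 \<subseteq> B1" using X12 p1 p2 c2 unfolding B_def by auto
    have AX2: "A \<inter> X2 \<subseteq> A2" using X12 p1 p2 c2 unfolding A_def by auto
    have BX2: "B \<inter> X2 \<subseteq> B2" using X12 p1 p2 c1 unfolding B_def by auto
    have vB: "v \<notin> B" using p1 p2 c1 c2 unfolding B_def by auto
    have rX1: "r \<notin> X1" using rv rR0 unfolding X1_def K_def by auto
    have split0: "C \<subseteq> K \<or> C \<subseteq> R0" if C: "connected_on C E" "C \<subseteq> X" "v \<notin> C" for C
    proof -
      obtain c where c: "c \<in> C" using C unfolding connected_on_def by auto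
      have CKR: "C \<subseteq> K \<union> R0" using C unfolding K_def by auto
      show ?thesis
      proof (cases "c \<in> K")
        case True
        have "y \<in> K" if "y \<in> C" for y
          by (rule rch_sep[OF conn_rch[OF C(1) c that] True]) (use CKR noedge2 in blast)
        then show ?thesis by auto
      next
        case False
        then have cR: "c \<in> R0" using CKR c by auto
        have "y \<in> R0" if "y \<in> C" for y
          by (rule rch_sep[OF conn_rch[OF C(1) c that] cR]) (use CKR noedge in blast)
        then show ?thesis by auto
      qed
    qed
    have splitK: "connected_on (C \<inter> X1) E" if C: "connected_on C E" "C \<subseteq> X" "v \<in> C" for C
    proof (rule conn_hub[of v])
      show "v \<in> C \<inter> X1" using C unfolding X1_def by auto
      fix x assume x: "x \<in> C \<inter> X1"
      show "rch (C \<inter> X1) E v x"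
      proof (cases "x = v")
        case False
        then have xK: "x \<in> C \<inter> K" using x unfolding X1_def by auto
        have "(v \<in> C \<inter> K \<and> rch (insert v (C \<inter> K)) E x v) \<or> rch (insert v (C \<inter> K)) E x v"
        proof (rule rch_gate[OF conn_rch[OF C(1) _ C(3)] xK])
          show "x \<in> C" using x by auto
          fix a b assume "a \<in> C \<inter> K" "b \<in> C" "E a b"
          then show "b \<in> C \<inter> K \<or> b = v" using noedge2 C(2) unfolding K_def by auto
        qed
        moreover have "insert v (C \<inter> K) = C \<inter> X1" using C unfolding X1_def by auto
        ultimately have "rch (C \<inter> X1) E x v" by auto
        then show ?thesis by (rule rch_sym[OF _ sym])
      qed auto
    qed (rule sym)
    have splitR: "connected_on (C \<inter> X2) E" if C: "connected_on C E" "C \<subseteq> X" "v \<in> C" for C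
    proof (rule conn_hub[of v])
      show "v \<in> C \<inter> X2" using C unfolding X2_def by auto
      fix x assume x: "x \<in> C \<inter> X2"
      show "rch (C \<inter> X2) E v x"
      proof (cases "x = v")
        case False
        then have xK: "x \<in> C \<inter> R0" using x unfolding X2_def by auto
        have "(v \<in> C \<inter> R0 \<and> rch (insert v (C \<inter> R0)) E x v) \<or> rch (insert v (C \<inter> R0)) E x v"
        proof (rule rch_gate[OF conn_rch[OF C(1) _ C(3)] xK])
          show "x \<in> C" using x by auto
          fix a b assume "a \<in> C \<inter> R0" "b \<in> C" "E a b"
          then show "b \<in> C \<inter> R0 \<or> b = v" using noedge C(2) unfolding K_def by auto
        qed
        moreover have "insert v (C \<inter> R0) = C \<inter> X2" using C unfolding X2_def by auto
        ultimately have "rch (C \<inter> X2) E x v" by auto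
        then show ?thesis by (rule rch_sym[OF _ sym])
      qed auto
    qed (rule sym)
    have bound: "card C \<le> (k + 1) div 2 \<and> (r \<in> C \<longrightarrow> card C \<le> k div 2)"
      if C: "connected_on C E" "C \<subseteq> A \<or> C \<subseteq> B" for C
    proof -
      have CX: "C \<subseteq> X" using C X12 p1 p2 unfolding A_def B_def by auto
      show ?thesis
      proof (cases "v \<in> C")
        case False
        from split0[OF C(1) CX False] show ?thesis
        proof
          assume "C \<subseteq> K"
          then have "C \<subseteq> X1" unfolding X1_def by auto
          then have "C \<subseteq> A1 \<or> C \<subseteq> B1" using C(2) AX1 BX1 by auto
          then have "card C \<le> (k1 + 1) div 2" using b1 C(1) by blast
          moreover have "r \<notin> C" using \<open>C \<subseteq> X1\<close> rX1 by auto
          ultimately show ?thesis using kk by auto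
        next
          assume "C \<subseteq> R0"
          then have "C \<subseteq> X2" unfolding X2_def by auto
          then have "C \<subseteq> A2 \<or> C \<subseteq> B2" using C(2) AX2 BX2 by auto
          then have "card C \<le> (k2 + 1) div 2" "r \<in> C \<longrightarrow> card C \<le> k2 div 2" using b2 r2 C(1) by blast+
          then show ?thesis using kk by auto
        qed
      next
        case True
        then have CA: "C \<subseteq> A" using C(2) vB by auto
        have c1': "card (C \<inter> X1) \<le> k1 div 2"
          using r1[OF splitK[OF C(1) CX True]] CA AX1 True unfolding X1_def by auto
        have c2': "card (C \<inter> X2) \<le> (k2 + 1) div 2" "r \<in> C \<longrightarrow> card (C \<inter> X2) \<le> k2 div 2"
          using b2[OF splitR[OF C(1) CX True]] r2[OF splitR[OF C(1) CX True]] CA AX2 rR0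
          unfolding X2_def by auto
        have finC: "finite C" using CX fin finite_subset by blast
        have "card (C \<inter> X1) + card (C \<inter> X2) = card C + 1"
        proof -
          have "(C \<inter> X1) \<union> (C \<inter> X2) = C" "(C \<inter> X1) \<inter> (C \<inter> X2) = {v}" using CX X12 True by auto
          then show ?thesis using card_Un_Int[of "C \<inter> X1" "C \<inter> X2"] finC by simp
        qed
        then show ?thesis using c1' c2' kk by auto
      qed
    qed
    have "col E X k r A B" unfolding col_def
    proof (intro conjI allI impI)
      show "A \<union> B = X" using p1 p2 X12 unfolding A_def B_def by auto
      show "A \<inter> B = {}" using p1 p2 X12 c1 c2 unfolding A_def B_def by auto
    qed (use bound in auto)
    then show ?thesis unfolding k_def by blast
  qed
qed



lemma ceil_half: "nat \<lceil>real k / 2\<rceil> = (k + 1) div 2"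
proof -
  have "\<lceil>real k / 2\<rceil> = int ((k + 1) div 2)"
  proof (rule ceiling_unique)
    show "real_of_int (int ((k + 1) div 2)) - 1 < real k / 2"
      by (cases "even k") (auto elim!: evenE oddE simp: field_simps)
    show "real k / 2 \<le> real_of_int (int ((k + 1) div 2))"
      by (cases "even k") (auto elim!: evenE oddE simp: field_simps)
  qed
  then show ?thesis by simp
qed

theorem lemma2:
  fixes V :: "'a set" and E :: "'a \<Rightarrow> 'a \<Rightarrow> bool" and S :: "'a set" and k :: nat
  assumes "simple_graph V E" and "connected_on V E"
    and "S \<subseteq> V" and "card S = k" and "k \<ge> 1"
  shows "\<exists>X A B. X \<subseteq> V \<and> connected_on X E \<and> S \<subseteq> X \<and>
           A \<union> B = X \<and> A \<inter> B = {} \<and>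
           (\<forall>C. component_of A E C \<longrightarrow> card C \<le> nat \<lceil>real k / 2\<rceil>) \<and>
           (\<forall>C. component_of B E C \<longrightarrow> card C \<le> nat \<lceil>real k / 2\<rceil>) \<and>
           connected_on X (\<lambda>a b. E a b \<and> ((a \<in> A \<and> b \<in> B) \<or> (a \<in> B \<and> b \<in> A))) \<and>
           (\<forall>v \<in> V - X. (\<exists>u \<in> X. E v u) \<longrightarrow> (\<exists>a \<in> A. E v a) \<and> (\<exists>b \<in> B. E v b))"
proof -
  have finV: "finite V" and sym: "\<And>a b. E a b \<Longrightarrow> E b a" and EV: "\<And>a b. E a b \<Longrightarrow> a \<in> V \<and> b \<in> V"
    using assms(1) unfolding simple_graph_def by auto
  define h where "h = nat \<lceil>real k / 2\<rceil>"
  have h: "h = (k + 1) div 2" unfolding h_def by (rule ceil_half)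
  have h1: "1 \<le> h" using h assms(5) by simp
  have finS: "finite S" using assms(3) finV finite_subset by blast
  have g0: "\<exists>X A B. good V E S h X A B"
  proof (cases "k = 1")
    case True
    then obtain s where s: "S = {s}" using assms(4) card_1_singletonE by blast
    have sV: "s \<in> V" using s assms(3) by auto
    have "good V E S h {s} {s} {}" unfolding good_def
    proof (intro conjI allI impI)
      show "connected_on {s} E" by (rule conn_hub[of s]) (use sym in auto)
      show "connected_on {s} (cr E {s} {})" by (rule conn_hub[of s]) (auto simp: cr_def)
      fix C assume "connected_on C E \<and> (C \<subseteq> {s} \<or> C \<subseteq> {})"
      then have "C \<subseteq> {s}" by auto
      then have "card C \<le> card {s}" using card_mono[of "{s}" C] by simp
      then show "card C \<le> h" using h1 by simp
    qed (use s sV in auto)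
    then show ?thesis by blast
  next
    case False
    then have k2: "2 \<le> card S" using assms(4,5) by simp
    define P where "P = (\<lambda>Y. Y \<subseteq> V \<and> S \<subseteq> Y \<and> connected_on Y E)"
    have "P V" unfolding P_def using assms(2,3) by auto
    then obtain Y where PY: "P Y" and minY: "\<forall>Y'. P Y' \<longrightarrow> card Y \<le> card Y'"
      using ex_has_least_nat[of P V card] by blast
    have Y: "Y \<subseteq> V" "S \<subseteq> Y" "connected_on Y E" using PY unfolding P_def by auto
    have finY: "finite Y" using Y finV finite_subset by blast
    have mn: "minl E Y S" unfolding minl_def
    proof (intro allI impI)
      fix Y' assume Y': "Y' \<subseteq> Y" "S \<subseteq> Y'" "connected_on Y' E"
      then have "P Y'" using Y unfolding P_def by auto
      then have "card Y \<le> card Y'" using minY by blast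
      moreover have "card Y' \<le> card Y" by (rule card_mono[OF finY Y'(1)])
      ultimately have "card Y' = card Y" by (rule antisym[rotated])
      then show "Y' = Y" by (rule card_subset_eq[OF finY Y'(1)])
    qed
    have "S \<noteq> {}" using k2 by auto
    then obtain r where r: "r \<in> S" by blast
    obtain A B where c: "col E Y (card S) r A B" using rec_col[OF sym finY Y(3) Y(2) mn r k2] by blast
    then have AB: "A \<union> B = Y" "A \<inter> B = {}"
      and bd: "\<And>C. connected_on C E \<Longrightarrow> C \<subseteq> A \<or> C \<subseteq> B \<Longrightarrow> card C \<le> (k + 1) div 2"
      unfolding col_def assms(4) by auto
    obtain A' B' where f: "A' \<union> B' = Y" "A' \<inter> B' = {}" "connected_on Y (cr E A' B')"
      "\<forall>C. connected_on C E \<and> (C \<subseteq> A' \<or> C \<subseteq> B') \<longrightarrow> C \<subseteq> A \<or> C \<subseteq> B"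
      using flip[OF finY sym Y(3) AB] by blast
    have "good V E S h Y A' B'" unfolding good_def h
    proof (intro conjI allI impI)
      fix C assume C: "connected_on C E \<and> (C \<subseteq> A' \<or> C \<subseteq> B')"
      then have "C \<subseteq> A \<or> C \<subseteq> B" using f(4) by blast
      then show "card C \<le> (k + 1) div 2" using bd C by blast
    qed (use Y f in \<open>simp_all\<close>)
    then show ?thesis by blast
  qed
  then obtain X0 A0 B0 where "good V E S h X0 A0 B0" by blast
  from extend[OF finV sym h1 this] obtain X A B where
    g: "good V E S h X A B" and nb: "\<forall>v \<in> V - X. (\<exists>u \<in> X. E v u) \<longrightarrow> (\<exists>a \<in> A. E v a) \<and> (\<exists>b \<in> B. E v b)"
    by blast
  have g': "X \<subseteq> V" "connected_on X E" "S \<subseteq> X" "A \<union> B = X" "A \<inter> B = {}"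
    "\<And>C. connected_on C E \<Longrightarrow> C \<subseteq> A \<or> C \<subseteq> B \<Longrightarrow> card C \<le> h" "connected_on X (cr E A B)"
    using g unfolding good_def by auto
  have compA: "card C \<le> h" if "component_of A E C" for C
    using g'(6) that unfolding component_of_def by blast
  have compB: "card C \<le> h" if "component_of B E C" for C
    using g'(6) that unfolding component_of_def by blast
  have crl: "connected_on X (\<lambda>a b. E a b \<and> ((a \<in> A \<and> b \<in> B) \<or> (a \<in> B \<and> b \<in> A)))"
    using g'(7) unfolding cr_def .
  show ?thesis
    apply (rule exI[of _ X], rule exI[of _ A], rule exI[of _ B])
    using g'(1-5) compA compB crl nb unfolding h_def by blast
qed

end
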